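(* Let $S$ be a primitive substitution over a finite alphabet $\mathcal{A}$ and let $\omega_0\in\mathcal{A}^{\mathbb{Z}}$. The following are equivalent: (i) $d_{\mathcal{H}}\big(\Omega_n(\omega_0),\Omega(S)\big)\to 0$ as $n\to\infty$; (ii) every directed path in $G(S)$ whose starting vertex is a $2$-word of $\omega_0$ (i.e. an element of $W(\omega_0)_2$) does not contain a closed directed subpath; (iii) every directed path in $G(S)$ whose starting vertex is an element of $W(\omega_0)_2$ has length strictly less than $|\mathcal{A}|^2$.
   Context: $\mathcal{A}$ is a finite alphabet, $\mathcal{A}^+=\bigcup_{n\ge1}\mathcal{A}^n$ is the set of finite words, $|u|$ the length of $u$, and $u\prec w$ means $u$ is a (contiguous) subword of $w$. A configuration is a map $\omega:\mathbb{Z}\to\mathcal{A}$; $\mathbb{Z}$ acts by $(m\cdot\omega)(n)=\omega(n-m)$. The metric on $\mathcal{A}^{\mathbb{Z}}$ is $d(\omega_1,\omega_2)=\inf\{\frac1{r+1}: r\ge0,\ \omega_1|_{(-r,r)}=\omega_2|_{(-r,r)}\}$. A subshift is a nonempty closed $\mathbb{Z}$-invariant subset of $\mathcal{A}^{\mathbb{Z}}$; $d_{\mathcal{H}}$ is the Hausdorff metric on subshifts induced by $d$. The dictionary of $\omega$ is $W(\omega)=\{\omega|_{[n_1,n_2)}: n_1<n_2\}$ (finite words read off $\omega$), $W(\Omega)=\bigcup_{\omega\in\Omega}W(\omega)$, and $W(\cdot)_\ell=W(\cdot)\cap\mathcal{A}^\ell$. A substitution is a map $S:\mathcal{A}\to\mathcal{A}^+$,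 extended to $\mathcal{A}^+$ by concatenation and to $\mathcal{A}^{\mathbb{Z}}$ by concatenation $\cdots S(\omega(-1))S(\omega(0))S(\omega(1))\cdots$ with $S(\omega(0))$ starting at position $0$. $S$ is primitive if there is $p\in\mathbb{N}$ with $b\prec S^p(a)$ for all $a,b\in\mathcal{A}$. The legal words are $W(S)=\{u\in\mathcal{A}^+: u\prec S^n(a)\text{ for some }a\in\mathcal{A},n\in\mathbb{N}\}$; words not in $W(S)$ are illegal. For primitive $S$, $\Omega(S)$ is the unique subshift with $W(\Omega(S))=W(S)$. The iterative hull sequence (IHS) is $\Omega_n(\omega_0)=\overline{\{m\cdot S^n(\omega_0):m\in\mathbb{Z}\}}$. The directed graph $G(S)$ has vertex set $\mathcal{A}^2$ and a directed edge $u\to w$ iff $u,w$ are both illegal and $w\prec S(u)$. A directed path of length $\ell\ge1$ is a tuple $(u_0,\dots,u_\ell)$ with $u_{j-1}\to u_j$ for all $j$; it is closed if $u_0=u_\ell$; a subpath is a contiguous sub-tuple which is itself a path. *)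

theory Defs
  imports Complex_Main
begin

text \<open>Configurations are maps int \<Rightarrow> 'a; finite words are nonempty lists.\<close>

type_synonym 'a config = "int \<Rightarrow> 'a"

definition shift :: "int \<Rightarrow> 'a config \<Rightarrow> 'a config" where
  "shift m \<omega> = (\<lambda>n. \<omega> (n - m))"

definition cdist :: "'a config \<Rightarrow> 'a config \<Rightarrow> real" where
  "cdist \<omega>1 \<omega>2 = Inf {1 / (real r + 1) | r :: nat.
      \<forall>n::int. - int r < n \<and> n < int r \<longrightarrow> \<omega>1 n = \<omega>2 n}"

definition cclosure :: "'a config set \<Rightarrow> 'a config set" where
  "cclosure X = {\<omega>. \<forall>\<epsilon>>0. \<exists>x\<in>X. cdist \<omega> x < \<epsilon>}"

definition subshift :: "'a config set \<Rightarrow> bool" where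
  "subshift \<Omega> \<longleftrightarrow> \<Omega> \<noteq> {} \<and> cclosure \<Omega> \<subseteq> \<Omega> \<and> (\<forall>m. \<forall>\<omega>\<in>\<Omega>. shift m \<omega> \<in> \<Omega>)"

definition hdist :: "'a config set \<Rightarrow> 'a config set \<Rightarrow> real" where
  "hdist A B = max (SUP x\<in>A. INF y\<in>B. cdist x y) (SUP y\<in>B. INF x\<in>A. cdist x y)"

definition subword :: "'a list \<Rightarrow> 'a list \<Rightarrow> bool" where
  "subword u w \<longleftrightarrow> u \<noteq> [] \<and> (\<exists>p s. w = p @ u @ s)"

definition dict :: "'a config \<Rightarrow> 'a list set" where
  "dict \<omega> = {map (\<lambda>i. \<omega> (n1 + int i)) [0..<nat (n2 - n1)] | n1 n2. n1 < n2}"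

definition dictset :: "'a config set \<Rightarrow> 'a list set" where
  "dictset \<Omega> = (\<Union>\<omega>\<in>\<Omega>. dict \<omega>)"

definition substw :: "('a \<Rightarrow> 'a list) \<Rightarrow> 'a list \<Rightarrow> 'a list" where
  "substw S w = concat (map S w)"

text \<open>Starting position of the block S(w(k)) in S(w), with S(w(0)) starting at 0.\<close>
definition blockpos :: "('a \<Rightarrow> 'a list) \<Rightarrow> 'a config \<Rightarrow> int \<Rightarrow> int" where
  "blockpos S \<omega> k = (if 0 \<le> k then (\<Sum>i\<in>{0..<k}. int (length (S (\<omega> i))))
                     else - (\<Sum>i\<in>{k..<0}. int (length (S (\<omega> i)))))"

definition substc :: "('a \<Rightarrow> 'a list) \<Rightarrow> 'a config \<Rightarrow> 'a config" where
  "substc S \<omega> = (THE \<omega>'. \<forall>k. \<forall>j < length (S (\<omega> k)).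
                     \<omega>' (blockpos S \<omega> k + int j) = S (\<omega> k) ! j)"

definition primitive :: "('a::finite \<Rightarrow> 'a list) \<Rightarrow> bool" where
  "primitive S \<longleftrightarrow> (\<exists>p>0. \<forall>a b. subword [b] ((substw S ^^ p) [a]))"

definition legal :: "('a \<Rightarrow> 'a list) \<Rightarrow> 'a list set" where
  "legal S = {u. u \<noteq> [] \<and> (\<exists>a n. subword u ((substw S ^^ n) [a]))}"

definition OmegaS :: "('a \<Rightarrow> 'a list) \<Rightarrow> 'a config set" where
  "OmegaS S = (THE \<Omega>. subshift \<Omega> \<and> dictset \<Omega> = legal S)"

definition IHS :: "('a \<Rightarrow> 'a list) \<Rightarrow> 'a config \<Rightarrow> nat \<Rightarrow> 'a config set" where
  "IHS S \<omega>0 n = cclosure {shift m ((substc S ^^ n) \<omega>0) | m. True}"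

definition Gedge :: "('a \<Rightarrow> 'a list) \<Rightarrow> 'a list \<Rightarrow> 'a list \<Rightarrow> bool" where
  "Gedge S u w \<longleftrightarrow> length u = 2 \<and> length w = 2 \<and> u \<notin> legal S \<and> w \<notin> legal S
                     \<and> subword w (substw S u)"

text \<open>A directed path (u_0,...,u_l), l \<ge> 1, given as the list of its vertices; its length is l.\<close>
definition Gpath :: "('a \<Rightarrow> 'a list) \<Rightarrow> 'a list list \<Rightarrow> bool" where
  "Gpath S us \<longleftrightarrow> 2 \<le> length us \<and> (\<forall>j. 0 < j \<and> j < length us \<longrightarrow> Gedge S (us ! (j - 1)) (us ! j))"

definition path_len :: "'a list list \<Rightarrow> nat" where
  "path_len us = length us - 1"

definition closed_path :: "'a list list \<Rightarrow> bool" where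
  "closed_path us \<longleftrightarrow> hd us = last us"

definition subpath :: "('a \<Rightarrow> 'a list) \<Rightarrow> 'a list list \<Rightarrow> 'a list list \<Rightarrow> bool" where
  "subpath S vs us \<longleftrightarrow> Gpath S vs \<and> (\<exists>i k. vs = take k (drop i us))"

end

theory Submission
  imports Defs
begin



definition win :: "'a config \<Rightarrow> int \<Rightarrow> nat \<Rightarrow> 'a list" where
  "win \<omega> n L = map (\<lambda>i. \<omega> (n + int i)) [0..<L]"

lemma length_win[simp]: "length (win \<omega> n L) = L" by (simp add: win_def)
lemma nth_win[simp]: "i < L \<Longrightarrow> win \<omega> n L ! i = \<omega> (n + int i)" by (simp add: win_def)

lemma win_Suc: "win \<omega> n (Suc L) = win \<omega> n L @ [\<omega> (n + int L)]"
  by (simp add: win_def)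

lemma win_add: "win \<omega> n (a + b) = win \<omega> n a @ win \<omega> (n + int a) b"
  by (rule nth_equalityI) (auto simp: nth_append add.assoc)

lemma dict_win: "dict \<omega> = {win \<omega> n L | n L. 0 < L}"
proof (rule set_eqI, rule iffI)
  fix u assume "u \<in> dict \<omega>"
  then obtain n1 n2 where u: "u = map (\<lambda>i. \<omega> (n1 + int i)) [0..<nat (n2 - n1)]" and "n1 < n2"
    unfolding dict_def by blast
  then have "u = win \<omega> n1 (nat (n2 - n1))" "0 < nat (n2 - n1)" by (simp_all add: win_def)
  then show "u \<in> {win \<omega> n L | n L. 0 < L}" by blast
next
  fix u assume "u \<in> {win \<omega> n L | n L. 0 < L}"
  then obtain n L where u: "u = win \<omega> n L" and L: "0 < L" by blast
  have "u = map (\<lambda>i. \<omega> (n + int i)) [0..<nat ((n + int L) - n)]" using u by (simp add: win_def)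
  moreover have "n < n + int L" using L by simp
  ultimately show "u \<in> dict \<omega>" unfolding dict_def by blast
qed

lemma win_in_dict: "0 < L \<Longrightarrow> win \<omega> n L \<in> dict \<omega>"
  by (auto simp: dict_win)

lemma dictE: "u \<in> dict \<omega> \<Longrightarrow> (\<And>n. u = win \<omega> n (length u) \<Longrightarrow> 0 < length u \<Longrightarrow> P) \<Longrightarrow> P"
proof -
  assume u: "u \<in> dict \<omega>" and h: "\<And>n. u = win \<omega> n (length u) \<Longrightarrow> 0 < length u \<Longrightarrow> P"
  from u obtain n L where "u = win \<omega> n L" "0 < L" unfolding dict_win by blast
  then show P using h[of n] by simp
qed

lemma win_shift: "win (shift m \<omega>) n L = win \<omega> (n - m) L"
  by (simp add: win_def shift_def algebra_simps)

lemma win_decomp: "win \<omega> n L = p @ v @ s \<Longrightarrow> v = win \<omega> (n + int (length p)) (length v)"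
proof -
  assume h: "win \<omega> n L = p @ v @ s"
  have L: "L = length p + length v + length s" using arg_cong[OF h, of length] by simp
  show ?thesis
  proof (rule nth_equalityI)
    fix i assume i: "i < length v"
    have "(p @ v @ s) ! (length p + i) = (v @ s) ! i" by (rule nth_append_length_plus)
    also have "\<dots> = v ! i" by (rule nth_append_left[OF i])
    finally have e1: "(p @ v @ s) ! (length p + i) = v ! i" .
    have e2: "win \<omega> n L ! (length p + i) = \<omega> (n + int (length p + i))" using i L by simp
    have "v ! i = \<omega> (n + int (length p + i))" using e1 e2 h by simp
    then show "v ! i = win \<omega> (n + int (length p)) (length v) ! i" using i by (simp add: add.assoc)
  qed simp
qed

lemma subword_trans: "subword u v \<Longrightarrow> subword v w \<Longrightarrow> subword u w"
  unfolding subword_def by (metis append.assoc)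

lemma subword_refl: "u \<noteq> [] \<Longrightarrow> subword u u"
  unfolding subword_def by (metis append_Nil append_Nil2)

lemma subword_length: "subword u w \<Longrightarrow> length u \<le> length w"
  unfolding subword_def by auto

lemma dict_subword: "u \<in> dict \<omega> \<Longrightarrow> subword v u \<Longrightarrow> v \<in> dict \<omega>"
proof -
  assume u: "u \<in> dict \<omega>" and sv: "subword v u"
  then obtain n where un: "u = win \<omega> n (length u)" by (auto elim: dictE)
  from sv obtain p s where "u = p @ v @ s" and "v \<noteq> []" unfolding subword_def by auto
  then have "v = win \<omega> (n + int (length p)) (length v)" using un win_decomp by metis
  then show ?thesis using \<open>v \<noteq> []\<close> by (metis length_greater_0_conv win_in_dict)
qed

lemma win_sub: assumes "p \<le> n" "n + int L \<le> p + int M" "0 < L"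
  shows "subword (win \<omega> n L) (win \<omega> p M)"
proof -
  define d where "d = nat (n - p)"
  have n: "n = p + int d" using assms d_def by simp
  have M: "M = d + (L + (M - d - L))" using assms n by linarith
  have "win \<omega> p M = win \<omega> p d @ win \<omega> n L @ win \<omega> (n + int L) (M - d - L)"
    by (subst M, simp only: win_add n add.assoc)
  moreover have "win \<omega> n L \<noteq> []" using assms by (metis length_greater_0_conv length_win)
  ultimately show ?thesis unfolding subword_def by blast
qed

lemma substw_append[simp]: "substw S (u @ v) = substw S u @ substw S v"
  by (simp add: substw_def)
lemma substw_Nil[simp]: "substw S [] = []" by (simp add: substw_def)
lemma substw_Cons: "substw S (a # u) = S a @ substw S u" by (simp add: substw_def)

lemma substw_nonempty: "\<forall>a. S a \<noteq> [] \<Longrightarrow> u \<noteq> [] \<Longrightarrow> substw S u \<noteq> []"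
  by (cases u) (auto simp: substw_Cons)

lemma substw_length: "\<forall>a. S a \<noteq> [] \<Longrightarrow> length u \<le> length (substw S u)"
proof (induction u)
  case (Cons a u)
  then have "length (S a) \<ge> 1" by (metis One_nat_def Suc_leI length_greater_0_conv)
  then show ?case using Cons by (simp add: substw_Cons)
qed simp

lemma substw_iter_length: "\<forall>a. S a \<noteq> [] \<Longrightarrow> length u \<le> length ((substw S ^^ n) u)"
  by (induction n) (auto intro: order_trans[OF _ substw_length])

lemma substw_subword: "\<forall>a. S a \<noteq> [] \<Longrightarrow> subword u w \<Longrightarrow> subword (substw S u) (substw S w)"
proof -
  assume ne: "\<forall>a. S a \<noteq> []" and "subword u w"
  then obtain p s where "u \<noteq> []" "w = p @ u @ s" unfolding subword_def by blast
  then have "substw S w = substw S p @ substw S u @ substw S s" by simp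
  then show ?thesis unfolding subword_def using substw_nonempty[OF ne \<open>u \<noteq> []\<close>] by blast
qed

lemma substw_iter_subword: "\<forall>a. S a \<noteq> [] \<Longrightarrow> subword u w \<Longrightarrow> subword ((substw S ^^ n) u) ((substw S ^^ n) w)"
  by (induction n) (auto simp: substw_subword)

lemma substw_concat: "substw S (concat xs) = concat (map (substw S) xs)"
  by (induction xs) auto

lemma substw_iter_letters: "substw (\<lambda>a. (substw S ^^ m) [a]) v = (substw S ^^ m) v"
proof (induction m arbitrary: v)
  case 0
  then show ?case by (induction v) (auto simp: substw_Cons)
next
  case (Suc m)
  have "substw (\<lambda>a. (substw S ^^ Suc m) [a]) v = concat (map (\<lambda>a. substw S ((substw S ^^ m) [a])) v)"
    by (simp add: substw_def)
  also have "\<dots> = substw S (concat (map (\<lambda>a. (substw S ^^ m) [a]) v))"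
    by (simp add: substw_concat o_def)
  also have "concat (map (\<lambda>a. (substw S ^^ m) [a]) v) = substw (\<lambda>a. (substw S ^^ m) [a]) v"
    by (simp add: substw_def)
  finally show ?case using Suc by simp
qed

lemma legal_single: "[a] \<in> legal S"
  unfolding legal_def by (auto intro!: exI[of _ a] exI[of _ 0] subword_refl)

lemma legal_subword: "u \<in> legal S \<Longrightarrow> subword v u \<Longrightarrow> v \<in> legal S"
  unfolding legal_def using subword_trans subword_def by blast

lemma legal_substw: "\<forall>a. S a \<noteq> [] \<Longrightarrow> u \<in> legal S \<Longrightarrow> substw S u \<in> legal S"
proof -
  assume ne: "\<forall>a. S a \<noteq> []" and u: "u \<in> legal S"
  then obtain a n where "u \<noteq> []" "subword u ((substw S ^^ n) [a])" unfolding legal_def by auto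
  then have "subword (substw S u) ((substw S ^^ Suc n) [a])" using substw_subword[OF ne] by simp
  then show ?thesis unfolding legal_def using substw_nonempty[OF ne \<open>u \<noteq> []\<close>] by blast
qed

lemma legal_iter: "\<forall>a. S a \<noteq> [] \<Longrightarrow> u \<in> legal S \<Longrightarrow> (substw S ^^ m) u \<in> legal S"
  by (induction m) (auto simp: legal_substw)




lemma bp_0[simp]: "blockpos T \<omega> 0 = 0" by (simp add: blockpos_def)

lemma bp_succ: "blockpos T \<omega> (k + 1) = blockpos T \<omega> k + int (length (T (\<omega> k)))"
proof (cases "0 \<le> k")
  case True
  have "{0..<k+1} = insert k {0..<k}" using True by auto
  then show ?thesis using True by (simp add: blockpos_def)
next
  case False
  show ?thesis
  proof (cases "k = -1")
    case True
    have "{-1..<0::int} = {-1}" by auto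
    then show ?thesis using True by (simp add: blockpos_def)
  next
    case False2: False
    have "{k..<0} = insert k {k+1..<0}" using False False2 by auto
    then show ?thesis using False False2 by (simp add: blockpos_def)
  qed
qed

lemma bp_unique:
  assumes "g 0 = 0" "\<And>k. g (k + 1) = g k + int (length (T (\<omega> k)))"
  shows "g k = blockpos T \<omega> k"
proof (induction k rule: int_induct[where k=0])
  case base then show ?case using assms by simp
next
  case (step1 i) then show ?case using assms(2)[of i] bp_succ[of T \<omega> i] by simp
next
  case (step2 i) then show ?case using assms(2)[of "i - 1"] bp_succ[of T \<omega> "i - 1"] by simp
qed

lemma bp_add: "int (length (substw T (win \<omega> k m))) = blockpos T \<omega> (k + int m) - blockpos T \<omega> k"
proof (induction m)
  case 0 then show ?case by (simp add: win_def)
next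
  case (Suc m)
  have kk: "k + int (Suc m) = (k + int m) + 1" by simp
  have "blockpos T \<omega> (k + int (Suc m)) = blockpos T \<omega> ((k + int m) + 1)" by (simp only: kk)
  also have "\<dots> = blockpos T \<omega> (k + int m) + int (length (T (\<omega> (k + int m))))" by (rule bp_succ)
  finally show ?case using Suc by (simp add: win_Suc substw_Cons)
qed

lemma bp_ge: assumes ne: "\<forall>a. T a \<noteq> []" shows "blockpos T \<omega> k + int m \<le> blockpos T \<omega> (k + int m)"
  using bp_add[of T \<omega> k m] substw_length[OF ne, of "win \<omega> k m"] by simp

lemma bp_mono: assumes ne: "\<forall>a. T a \<noteq> []" and "k < k'" shows "blockpos T \<omega> k < blockpos T \<omega> k'"
proof -
  have "k' = k + int (nat (k' - k))" using assms by simp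
  then show ?thesis using bp_ge[OF ne, of \<omega> k "nat (k' - k)"] assms by simp
qed

lemma bp_monoE: assumes ne: "\<forall>a. T a \<noteq> []" and "k \<le> k'" shows "blockpos T \<omega> k \<le> blockpos T \<omega> k'"
  using bp_mono[OF ne] assms by (cases "k = k'") (auto intro: less_imp_le)

lemma bp_cover: assumes ne: "\<forall>a. T a \<noteq> []" shows "\<exists>k. blockpos T \<omega> k \<le> n \<and> n < blockpos T \<omega> (k + 1)"
proof (induction n rule: int_induct[where k=0])
  case base
  have "0 < blockpos T \<omega> 1" using bp_mono[OF ne, of 0 1] by simp
  then show ?case by (intro exI[of _ 0]) simp
next
  case (step1 i)
  then obtain k where k: "blockpos T \<omega> k \<le> i" "i < blockpos T \<omega> (k + 1)" by blast
  show ?case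
  proof (cases "i + 1 < blockpos T \<omega> (k + 1)")
    case True then show ?thesis using k by (intro exI[of _ k]) simp
  next
    case False
    then have "i + 1 = blockpos T \<omega> (k + 1)" using k by simp
    moreover have "blockpos T \<omega> (k + 1) < blockpos T \<omega> (k + 1 + 1)" using bp_mono[OF ne] by simp
    ultimately show ?thesis by (intro exI[of _ "k+1"]) simp
  qed
next
  case (step2 i)
  then obtain k where k: "blockpos T \<omega> k \<le> i" "i < blockpos T \<omega> (k + 1)" by blast
  show ?case
  proof (cases "blockpos T \<omega> k \<le> i - 1")
    case True then show ?thesis using k by (intro exI[of _ k]) simp
  next
    case False
    then have "i = blockpos T \<omega> k" using k by simp
    moreover have "blockpos T \<omega> (k - 1) < blockpos T \<omega> k" using bp_mono[OF ne] by simp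
    ultimately show ?thesis by (intro exI[of _ "k-1"]) simp
  qed
qed

lemma bp_block_unique:
  assumes ne: "\<forall>a. T a \<noteq> []"
    and "blockpos T \<omega> k \<le> n" "n < blockpos T \<omega> (k + 1)"
    and "blockpos T \<omega> k' \<le> n" "n < blockpos T \<omega> (k' + 1)"
  shows "k = k'"
proof (rule ccontr)
  assume "k \<noteq> k'"
  then have "k + 1 \<le> k' \<or> k' + 1 \<le> k" by linarith
  then show False
    using bp_monoE[OF ne, of "k + 1" k' \<omega>] bp_monoE[OF ne, of "k' + 1" k \<omega>] assms by auto
qed

definition substc_prop :: "('a \<Rightarrow> 'a list) \<Rightarrow> 'a config \<Rightarrow> 'a config \<Rightarrow> bool" where
  "substc_prop T \<omega> \<sigma> \<longleftrightarrow> (\<forall>k. \<forall>j < length (T (\<omega> k)). \<sigma> (blockpos T \<omega> k + int j) = T (\<omega> k) ! j)"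

lemma substc_prop_unique:
  assumes ne: "\<forall>a. T a \<noteq> []" and "substc_prop T \<omega> \<sigma>" "substc_prop T \<omega> \<sigma>'"
  shows "\<sigma> = \<sigma>'"
proof
  fix n
  obtain k where k: "blockpos T \<omega> k \<le> n" "n < blockpos T \<omega> (k + 1)" using bp_cover[OF ne] by blast
  define j where "j = nat (n - blockpos T \<omega> k)"
  have n: "n = blockpos T \<omega> k + int j" using k j_def by simp
  have j: "j < length (T (\<omega> k))" using k n bp_succ[of T \<omega> k] by simp
  show "\<sigma> n = \<sigma>' n" using assms(2,3) j n unfolding substc_prop_def by simp
qed

lemma substc_prop_exists:
  assumes ne: "\<forall>a. T a \<noteq> []"
  shows "\<exists>\<sigma>. substc_prop T \<omega> \<sigma>"
proof -
  define blk where "blk n = (THE k. blockpos T \<omega> k \<le> n \<and> n < blockpos T \<omega> (k + 1))" for n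
  define \<sigma> where "\<sigma> n = T (\<omega> (blk n)) ! nat (n - blockpos T \<omega> (blk n))" for n
  have "substc_prop T \<omega> \<sigma>" unfolding substc_prop_def
  proof (intro allI impI)
    fix k j assume j: "j < length (T (\<omega> k))"
    let ?n = "blockpos T \<omega> k + int j"
    have h: "blockpos T \<omega> k \<le> ?n \<and> ?n < blockpos T \<omega> (k + 1)" using j bp_succ[of T \<omega> k] by simp
    have "blk ?n = k" unfolding blk_def
      apply (rule the_equality)
      using h apply blast
      using bp_block_unique[OF ne] h by blast
    then show "\<sigma> ?n = T (\<omega> k) ! j" unfolding \<sigma>_def by simp
  qed
  then show ?thesis by blast
qed

lemma substc_is_prop: assumes ne: "\<forall>a. T a \<noteq> []" shows "substc_prop T \<omega> (substc T \<omega>)"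
proof -
  have e: "substc T \<omega> = (THE \<sigma>. substc_prop T \<omega> \<sigma>)" unfolding substc_def substc_prop_def by simp
  have "substc_prop T \<omega> (THE \<sigma>. substc_prop T \<omega> \<sigma>)"
    using substc_prop_exists[OF ne] substc_prop_unique[OF ne] by (metis theI)
  then show ?thesis using e by simp
qed

lemma substc_at: "\<forall>a. T a \<noteq> [] \<Longrightarrow> j < length (T (\<omega> k)) \<Longrightarrow> substc T \<omega> (blockpos T \<omega> k + int j) = T (\<omega> k) ! j"
  using substc_is_prop unfolding substc_prop_def by blast

lemma substc_eqI: "\<forall>a. T a \<noteq> [] \<Longrightarrow> substc_prop T \<omega> \<sigma> \<Longrightarrow> substc T \<omega> = \<sigma>"
  using substc_is_prop substc_prop_unique by blast

lemma substc_block: "\<forall>a. T a \<noteq> [] \<Longrightarrow> win (substc T \<omega>) (blockpos T \<omega> k) (length (T (\<omega> k))) = T (\<omega> k)"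
  by (rule nth_equalityI) (auto simp: substc_at)

lemma substc_win:
  assumes ne: "\<forall>a. T a \<noteq> []"
  shows "win (substc T \<omega>) (blockpos T \<omega> k) (length (substw T (win \<omega> k m))) = substw T (win \<omega> k m)"
proof (induction m)
  case 0 then show ?case by (simp add: win_def)
next
  case (Suc m)
  let ?X = "substw T (win \<omega> k m)"
  have e: "substw T (win \<omega> k (Suc m)) = ?X @ T (\<omega> (k + int m))"
    by (simp add: win_Suc substw_Cons)
  have p: "blockpos T \<omega> k + int (length ?X) = blockpos T \<omega> (k + int m)" using bp_add[of T \<omega> k m] by simp
  show ?case unfolding e length_append win_add p using Suc substc_block[OF ne, of \<omega> "k + int m"] by simp
qed

lemma dict_substc: "\<forall>a. T a \<noteq> [] \<Longrightarrow> v \<in> dict \<omega> \<Longrightarrow> substw T v \<in> dict (substc T \<omega>)"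
proof -
  assume ne: "\<forall>a. T a \<noteq> []" and v: "v \<in> dict \<omega>"
  then obtain n where vn: "v = win \<omega> n (length v)" "0 < length v" by (auto elim: dictE)
  have "substw T v \<noteq> []" using substw_nonempty[OF ne] vn by auto
  then show ?thesis using substc_win[OF ne, of \<omega> n "length v"] vn win_in_dict
    by (metis length_greater_0_conv)
qed

lemma dict_iter: "\<forall>a. S a \<noteq> [] \<Longrightarrow> v \<in> dict \<omega> \<Longrightarrow> (substw S ^^ m) v \<in> dict ((substc S ^^ m) \<omega>)"
  by (induction m) (auto simp: dict_substc)

lemma window_cover:
  assumes ne: "\<forall>a. T a \<noteq> []" and "blockpos T \<omega> k \<le> n" "n + int L \<le> blockpos T \<omega> (k + int M)" "0 < L"
  shows "subword (win (substc T \<omega>) n L) (substw T (win \<omega> k M))"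
proof -
  let ?X = "substw T (win \<omega> k M)"
  have "subword (win (substc T \<omega>) n L) (win (substc T \<omega>) (blockpos T \<omega> k) (length ?X))"
    by (rule win_sub) (use assms bp_add[of T \<omega> k M] in auto)
  then show ?thesis using substc_win[OF ne] by metis
qed

lemma substc_comp:
  assumes neS: "\<forall>a. S a \<noteq> []" and neT: "\<forall>a. T a \<noteq> []"
  shows "substc S (substc T \<omega>) = substc (\<lambda>a. substw S (T a)) \<omega>"
proof -
  let ?\<sigma> = "substc T \<omega>"
  let ?U = "\<lambda>a. substw S (T a)"
  have neU: "\<forall>a. ?U a \<noteq> []" using neS neT substw_nonempty by blast
  define g where "g k = blockpos S ?\<sigma> (blockpos T \<omega> k)" for k
  have blkT: "win ?\<sigma> (blockpos T \<omega> k) (length (T (\<omega> k))) = T (\<omega> k)" for k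
    by (rule substc_block[OF neT])
  have g: "g k = blockpos ?U \<omega> k" for k
  proof (rule bp_unique)
    show "g 0 = 0" by (simp add: g_def)
    fix k
    have "int (length (substw S (win ?\<sigma> (blockpos T \<omega> k) (length (T (\<omega> k))))))
       = blockpos S ?\<sigma> (blockpos T \<omega> k + int (length (T (\<omega> k)))) - blockpos S ?\<sigma> (blockpos T \<omega> k)"
      by (rule bp_add)
    then show "g (k + 1) = g k + int (length (?U (\<omega> k)))"
      unfolding g_def blkT bp_succ by simp
  qed
  have "substc_prop ?U \<omega> (substc S ?\<sigma>)" unfolding substc_prop_def
  proof (intro allI impI)
    fix k j assume j: "j < length (?U (\<omega> k))"
    have w: "win (substc S ?\<sigma>) (g k) (length (?U (\<omega> k))) = ?U (\<omega> k)"
      using substc_win[OF neS, of ?\<sigma> "blockpos T \<omega> k" "length (T (\<omega> k))"] unfolding blkT g_def .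
    show "substc S ?\<sigma> (blockpos ?U \<omega> k + int j) = ?U (\<omega> k) ! j"
      using arg_cong[OF w, of "\<lambda>xs. xs ! j"] j g[of k] by simp
  qed
  then show ?thesis using substc_eqI[OF neU] by metis
qed

lemma substc_id: "substc (\<lambda>a. [a]) \<omega> = \<omega>"
proof -
  have b: "blockpos (\<lambda>a. [a]) \<omega> k = k" for k
    using bp_unique[of "\<lambda>k. k" "\<lambda>a. [a]" \<omega> k] by simp
  show ?thesis by (rule substc_eqI) (auto simp: substc_prop_def b)
qed

lemma substw_iter_ne: "\<forall>a. S a \<noteq> [] \<Longrightarrow> (substw S ^^ m) [a] \<noteq> []"
  using substw_iter_length[of S "[a]" m] by auto

lemma substc_iter:
  assumes ne: "\<forall>a. S a \<noteq> []"
  shows "(substc S ^^ m) \<omega> = substc (\<lambda>a. (substw S ^^ m) [a]) \<omega>"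
proof (induction m)
  case 0 then show ?case by (simp add: substc_id)
next
  case (Suc m)
  have "(substc S ^^ Suc m) \<omega> = substc S (substc (\<lambda>a. (substw S ^^ m) [a]) \<omega>)" using Suc by simp
  also have "\<dots> = substc (\<lambda>a. substw S ((substw S ^^ m) [a])) \<omega>"
    by (rule substc_comp[OF ne]) (use substw_iter_ne[OF ne] in blast)
  finally show ?case by simp
qed




definition agree :: "nat \<Rightarrow> 'a config \<Rightarrow> 'a config \<Rightarrow> bool" where
  "agree r x y \<longleftrightarrow> (\<forall>n::int. - int r < n \<and> n < int r \<longrightarrow> x n = y n)"

lemma cdist_eq: "cdist x y = Inf {1 / (real r + 1) | r. agree r x y}"
  unfolding cdist_def agree_def by simp

lemma cdist_set_ne: "{1 / (real r + 1) | r. agree r x y} \<noteq> {}"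
proof -
  have "agree 0 x y" by (auto simp: agree_def)
  then show ?thesis by blast
qed

lemma cdist_set_bdd: "bdd_below {1 / (real r + 1) | r. agree r x y}"
  by (rule bdd_belowI[of _ 0]) auto

lemma cdist_nonneg: "0 \<le> cdist x y"
  unfolding cdist_eq by (rule cInf_greatest[OF cdist_set_ne]) auto

lemma agree_cdist: "agree r x y \<Longrightarrow> cdist x y \<le> 1 / (real r + 1)"
  unfolding cdist_eq by (rule cInf_lower[OF _ cdist_set_bdd]) blast

lemma cdist_le1: "cdist x y \<le> 1"
proof -
  have "agree 0 x y" by (auto simp: agree_def)
  then show ?thesis using agree_cdist[of 0 x y] by simp
qed

lemma cdist_agree: assumes "cdist x y < 1 / (real r + 1)" shows "agree r x y"
proof -
  obtain t where t: "t \<in> {1 / (real r + 1) | r. agree r x y}" "t < 1 / (real r + 1)"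
    using cInf_lessD[OF cdist_set_ne] assms unfolding cdist_eq by blast
  then obtain r' where r': "agree r' x y" "1 / (real r' + 1) < 1 / (real r + 1)" by blast
  have "\<not> r' \<le> r"
  proof
    assume "r' \<le> r"
    then have "1 / (real r + 1) \<le> 1 / (real r' + 1)" by (intro divide_left_mono) auto
    with r'(2) show False by simp
  qed
  then have "r < r'" by simp
  then show ?thesis using r'(1) unfolding agree_def by auto
qed

lemma small_eps: "0 < (\<epsilon>::real) \<Longrightarrow> \<exists>r::nat. 1 / (real r + 1) < \<epsilon>"
proof -
  assume e: "0 < \<epsilon>"
  obtain r :: nat where "1 / \<epsilon> < real r" using reals_Archimedean2 by blast
  then have "1 / \<epsilon> < real r + 1" by simp
  then have "1 / (real r + 1) < \<epsilon>" using e by (simp add: divide_less_eq mult.commute)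
  then show ?thesis by blast
qed

lemma cclosure_iff: "x \<in> cclosure X \<longleftrightarrow> (\<forall>r. \<exists>z\<in>X. agree r x z)"
proof
  assume h: "x \<in> cclosure X"
  show "\<forall>r. \<exists>z\<in>X. agree r x z"
  proof
    fix r :: nat
    have "(0::real) < 1 / (real r + 1)" by simp
    then obtain z where "z \<in> X" "cdist x z < 1 / (real r + 1)" using h unfolding cclosure_def by blast
    then show "\<exists>z\<in>X. agree r x z" using cdist_agree by blast
  qed
next
  assume h: "\<forall>r. \<exists>z\<in>X. agree r x z"
  show "x \<in> cclosure X" unfolding cclosure_def
  proof (intro CollectI allI impI)
    fix \<epsilon> :: real assume "0 < \<epsilon>"
    then obtain r where r: "1 / (real r + 1) < \<epsilon>" using small_eps by blast
    obtain z where "z \<in> X" "agree r x z" using h by blast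
    then show "\<exists>z\<in>X. cdist x z < \<epsilon>" using agree_cdist[of r x z] r by force
  qed
qed

lemma agree_refl: "agree r x x" by (simp add: agree_def)

lemma subset_cclosure: "X \<subseteq> cclosure X"
  using cclosure_iff agree_refl by blast

lemma agree_of_win:
  assumes "win x (- int r) (2 * r) = win z (- int r) (2 * r)"
  shows "agree r x z"
  unfolding agree_def
proof (intro allI impI)
  fix n :: int assume n: "- int r < n \<and> n < int r"
  define i where "i = nat (n + int r)"
  have i: "i < 2 * r" "n = - int r + int i" using n i_def by auto
  show "x n = z n" using arg_cong[OF assms, of "\<lambda>xs. xs ! i"] i by simp
qed

lemma align:
  assumes "win x (- int r) (2 * r) = win y n1 (2 * r)"
  shows "agree r x (shift (- int r - n1) y)"
  by (rule agree_of_win) (simp add: assms win_shift)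

lemma subshift_dict:
  assumes ss: "subshift \<Omega>" and d: "dict x \<subseteq> dictset \<Omega>"
  shows "x \<in> \<Omega>"
proof -
  have "x \<in> cclosure \<Omega>" unfolding cclosure_iff
  proof
    fix r
    show "\<exists>z\<in>\<Omega>. agree r x z"
    proof (cases "r = 0")
      case True
      obtain z where "z \<in> \<Omega>" using ss unfolding subshift_def by blast
      then show ?thesis using True by (auto simp: agree_def)
    next
      case False
      have "win x (- int r) (2 * r) \<in> dictset \<Omega>" using d win_in_dict[of "2*r" x "- int r"] False by auto
      then obtain y where y: "y \<in> \<Omega>" "win x (- int r) (2 * r) \<in> dict y" unfolding dictset_def by blast
      obtain n1 where "win x (- int r) (2 * r) = win y n1 (length (win x (- int r) (2 * r)))"
        using y(2) by (rule dictE)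
      then have "win x (- int r) (2 * r) = win y n1 (2 * r)" by simp
      then have "agree r x (shift (- int r - n1) y)" by (rule align)
      moreover have "shift (- int r - n1) y \<in> \<Omega>" using ss y unfolding subshift_def by blast
      ultimately show ?thesis by blast
    qed
  qed
  then show ?thesis using ss unfolding subshift_def by blast
qed

lemma dict_sub_dictset: "x \<in> \<Omega> \<Longrightarrow> dict x \<subseteq> dictset \<Omega>"
  unfolding dictset_def by blast

lemma OmegaS_prop:
  assumes "\<exists>\<Omega>. subshift \<Omega> \<and> dictset \<Omega> = legal S"
  shows "subshift (OmegaS S) \<and> dictset (OmegaS S) = legal S"
proof -
  have uniq: "\<Omega>1 = \<Omega>2" if "subshift \<Omega>1 \<and> dictset \<Omega>1 = legal S" "subshift \<Omega>2 \<and> dictset \<Omega>2 = legal S"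
    for \<Omega>1 \<Omega>2
  proof
    show "\<Omega>1 \<subseteq> \<Omega>2"
    proof
      fix x assume "x \<in> \<Omega>1"
      then have "dict x \<subseteq> dictset \<Omega>2" using dict_sub_dictset that by metis
      then show "x \<in> \<Omega>2" using subshift_dict that by blast
    qed
    show "\<Omega>2 \<subseteq> \<Omega>1"
    proof
      fix x assume "x \<in> \<Omega>2"
      then have "dict x \<subseteq> dictset \<Omega>1" using dict_sub_dictset that by metis
      then show "x \<in> \<Omega>1" using subshift_dict that by blast
    qed
  qed
  obtain \<Omega>0 where o: "subshift \<Omega>0 \<and> dictset \<Omega>0 = legal S" using assms by blast
  have "subshift (THE \<Omega>. subshift \<Omega> \<and> dictset \<Omega> = legal S) \<and> dictset (THE \<Omega>. subshift \<Omega> \<and> dictset \<Omega> = legal S) = legal S"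
    by (rule theI[of _ \<Omega>0]) (use o uniq in blast)+
  then show ?thesis unfolding OmegaS_def .
qed

lemma hdist_le:
  fixes A B :: "'a config set"
  assumes "A \<noteq> {}" "B \<noteq> {}"
    and h1: "\<forall>x\<in>A. \<exists>y\<in>B. cdist x y \<le> \<delta>" and h2: "\<forall>y\<in>B. \<exists>x\<in>A. cdist x y \<le> \<delta>"
  shows "hdist A B \<le> \<delta>"
proof -
  have "(SUP x\<in>A. INF y\<in>B. cdist x y) \<le> \<delta>"
  proof (rule cSUP_least[OF assms(1)])
    fix x assume "x \<in> A"
    then obtain y where "y \<in> B" "cdist x y \<le> \<delta>" using h1 by blast
    moreover have "(INF y\<in>B. cdist x y) \<le> cdist x y"
      by (rule cINF_lower[OF _ \<open>y \<in> B\<close>]) (auto intro: bdd_belowI2[where m=0] cdist_nonneg)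
    ultimately show "(INF y\<in>B. cdist x y) \<le> \<delta>" by linarith
  qed
  moreover have "(SUP y\<in>B. INF x\<in>A. cdist x y) \<le> \<delta>"
  proof (rule cSUP_least[OF assms(2)])
    fix y assume "y \<in> B"
    then obtain x where "x \<in> A" "cdist x y \<le> \<delta>" using h2 by blast
    moreover have "(INF x\<in>A. cdist x y) \<le> cdist x y"
      by (rule cINF_lower[OF _ \<open>x \<in> A\<close>]) (auto intro: bdd_belowI2[where m=0] cdist_nonneg)
    ultimately show "(INF x\<in>A. cdist x y) \<le> \<delta>" by linarith
  qed
  ultimately show ?thesis unfolding hdist_def by simp
qed

lemma hdist_ge:
  fixes A B :: "'a config set"
  assumes "x \<in> A" "B \<noteq> {}" and h: "\<forall>y\<in>B. \<delta> \<le> cdist x y"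
  shows "\<delta> \<le> hdist A B"
proof -
  have i: "\<delta> \<le> (INF y\<in>B. cdist x y)" by (rule cINF_greatest[OF assms(2)]) (use h in blast)
  obtain y0 where "y0 \<in> B" using assms(2) by blast
  have bdd: "bdd_above ((\<lambda>x. INF y\<in>B. cdist x y) ` A)"
  proof (rule bdd_aboveI2[where M=1])
    fix x' assume "x' \<in> A"
    have "(INF y\<in>B. cdist x' y) \<le> cdist x' y0"
      by (rule cINF_lower[OF _ \<open>y0 \<in> B\<close>]) (auto intro: bdd_belowI2[where m=0] cdist_nonneg)
    then show "(INF y\<in>B. cdist x' y) \<le> 1" using cdist_le1[of x' y0] by linarith
  qed
  have "(INF y\<in>B. cdist x y) \<le> (SUP x\<in>A. INF y\<in>B. cdist x y)" by (rule cSUP_upper[OF assms(1) bdd])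
  then show ?thesis using i unfolding hdist_def by linarith
qed




lemma edge_step:
  assumes ne: "\<forall>a. S a \<noteq> []" and u: "u \<in> dict \<omega>" and e: "Gedge S u w"
  shows "w \<in> dict (substc S \<omega>)"
  using dict_subword[OF dict_substc[OF ne u]] e unfolding Gedge_def by blast

lemma back_step:
  assumes ne: "\<forall>a. S a \<noteq> []" and u: "u \<in> dict (substc S \<omega>)" "length u = 2" "u \<notin> legal S"
  shows "\<exists>u'. u' \<in> dict \<omega> \<and> Gedge S u' u"
proof -
  obtain n where "u = win (substc S \<omega>) n (length u)" using u(1) by (rule dictE)
  then have un: "u = win (substc S \<omega>) n 2" using u(2) by simp
  obtain k where k: "blockpos S \<omega> k \<le> n" "n < blockpos S \<omega> (k + 1)" using bp_cover[OF ne] by blast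
  have "blockpos S \<omega> (k + 1) < blockpos S \<omega> (k + 1 + 1)" using bp_mono[OF ne] by simp
  then have "n + int 2 \<le> blockpos S \<omega> (k + int 2)" using k by (simp add: add.assoc)
  then have sw: "subword u (substw S (win \<omega> k 2))" unfolding un by (rule window_cover[OF ne k(1)]) simp
  let ?u' = "win \<omega> k 2"
  have d: "?u' \<in> dict \<omega>" by (rule win_in_dict) simp
  have "?u' \<notin> legal S"
  proof
    assume "?u' \<in> legal S"
    then have "substw S ?u' \<in> legal S" by (rule legal_substw[OF ne])
    then show False using legal_subword sw u(3) by blast
  qed
  then have "Gedge S ?u' u" using sw u unfolding Gedge_def by simp
  then show ?thesis using d by blast
qed

lemma Gedge_len: "Gedge S u w \<Longrightarrow> length u = 2 \<and> length w = 2 \<and> u \<notin> legal S \<and> w \<notin> legal S"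
  unfolding Gedge_def by simp

lemma forward_walk:
  assumes ne: "\<forall>a. S a \<noteq> []" and f0: "f 0 \<in> dict \<omega>0" and e: "\<forall>j. Gedge S (f j) (f (Suc j))"
  shows "f n \<in> dict ((substc S ^^ n) \<omega>0) \<and> f n \<notin> legal S \<and> length (f n) = 2"
proof -
  have "f n \<in> dict ((substc S ^^ n) \<omega>0)"
  proof (induction n)
    case 0 then show ?case using f0 by simp
  next
    case (Suc n)
    have "f (Suc n) \<in> dict (substc S ((substc S ^^ n) \<omega>0))"
      by (rule edge_step[OF ne Suc e[rule_format]])
    then show ?case by simp
  qed
  moreover have "f n \<notin> legal S \<and> length (f n) = 2" using Gedge_len[OF e[rule_format, of n]] by simp
  ultimately show ?thesis by simp
qed

lemma back_path:
  assumes ne: "\<forall>a. S a \<noteq> []"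
  shows "u \<in> dict ((substc S ^^ n) \<omega>0) \<Longrightarrow> length u = 2 \<Longrightarrow> u \<notin> legal S \<Longrightarrow>
     \<exists>us. length us = Suc n \<and> hd us \<in> dict \<omega>0 \<and> last us = u
         \<and> (\<forall>j. 0 < j \<and> j < length us \<longrightarrow> Gedge S (us ! (j - 1)) (us ! j))"
proof (induction n arbitrary: u)
  case 0
  then show ?case by (intro exI[of _ "[u]"]) auto
next
  case (Suc n)
  have "u \<in> dict (substc S ((substc S ^^ n) \<omega>0))" using Suc.prems by simp
  then obtain u' where u': "u' \<in> dict ((substc S ^^ n) \<omega>0)" "Gedge S u' u"
    using back_step[OF ne] Suc.prems by blast
  then obtain us where us: "length us = Suc n" "hd us \<in> dict \<omega>0" "last us = u'"
    "\<forall>j. 0 < j \<and> j < length us \<longrightarrow> Gedge S (us ! (j - 1)) (us ! j)"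
    using Suc.IH Gedge_len[OF u'(2)] by blast
  have ne_us: "us \<noteq> []" using us(1) by auto
  show ?case
  proof (intro exI[of _ "us @ [u]"] conjI allI impI)
    show "length (us @ [u]) = Suc (Suc n)" using us by simp
    show "hd (us @ [u]) \<in> dict \<omega>0" using us ne_us by simp
    show "last (us @ [u]) = u" by simp
    fix j assume j: "0 < j \<and> j < length (us @ [u])"
    show "Gedge S ((us @ [u]) ! (j - 1)) ((us @ [u]) ! j)"
    proof (cases "j < length us")
      case True
      have "(us @ [u]) ! (j - 1) = us ! (j - 1)" "(us @ [u]) ! j = us ! j" using True
        by (simp_all add: nth_append_left)
      then show ?thesis using us(4) j True by simp
    next
      case False
      then have jj: "j = length us" using j by simp
      have "us ! (length us - 1) = u'" using us(3) ne_us by (simp add: last_conv_nth)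
      then show ?thesis using jj u'(2) ne_us by (simp add: nth_append)
    qed
  qed
qed

lemma pump:
  assumes p: "Gpath S us" and sp: "subpath S vs us" and cl: "closed_path vs"
  shows "\<exists>f. f 0 = hd us \<and> (\<forall>j. Gedge S (f j) (f (Suc j)))"
proof -
  obtain i k where vs: "vs = take k (drop i us)" and pv: "Gpath S vs" using sp unfolding subpath_def by blast
  have lv: "2 \<le> length vs" using pv unfolding Gpath_def by simp
  define c where "c = length vs - 1"
  have c1: "1 \<le> c" using lv c_def by simp
  have lvs: "length vs = min k (length us - i)" using vs by simp
  have ic: "i + c < length us" using lvs lv c_def by (cases "k \<le> length us - i") (simp_all add: min_def)
  have vnth: "vs ! t = us ! (i + t)" if "t < length vs" for t
  proof -
    have "t < k" "i + t < length us" using that lvs by auto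
    then have "i \<le> length us" by simp
    then show ?thesis using vs \<open>t < k\<close> by (simp add: nth_drop)
  qed
  have eq: "us ! i = us ! (i + c)"
  proof -
    have "vs \<noteq> []" using lv by auto
    then have "hd vs = vs ! 0" by (rule hd_conv_nth)
    moreover have "last vs = vs ! c" using last_conv_nth[OF \<open>vs \<noteq> []\<close>] c_def by simp
    moreover have "vs ! 0 = us ! i" using vnth[of 0] \<open>vs \<noteq> []\<close> by simp
    moreover have "vs ! c = us ! (i + c)" using vnth[of c] lv c_def by simp
    moreover have "hd vs = last vs" using cl unfolding closed_path_def .
    ultimately show ?thesis by simp
  qed
  have E: "Gedge S (us ! (t - 1)) (us ! t)" if "0 < t" "t < length us" for t
    using p that unfolding Gpath_def by blast
  define f where "f j = (if j < i then us ! j else us ! (i + (j - i) mod c))" for j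
  have "f 0 = hd us"
  proof -
    have "us \<noteq> []" using ic by auto
    then show ?thesis unfolding f_def by (auto simp: hd_conv_nth)
  qed
  moreover have "Gedge S (f j) (f (Suc j))" for j
  proof (cases "Suc j < i")
    case True
    then show ?thesis using E[of "Suc j"] ic unfolding f_def by simp
  next
    case False
    show ?thesis
    proof (cases "Suc j = i")
      case True
      have "j = i - 1" using True by simp
      then show ?thesis using True E[of "Suc j"] ic unfolding f_def by simp
    next
      case False2: False
      then have ji: "i \<le> j" using False by simp
      define t where "t = (j - i) mod c"
      have tc: "t < c" using c1 t_def by simp
      have fj: "f j = us ! (i + t)" unfolding f_def t_def using ji by simp
      have sj: "Suc j - i = Suc (j - i)" using ji by simp
      show ?thesis
      proof (cases "Suc t = c")
        case True
        have "f (Suc j) = us ! i" unfolding f_def using ji sj True t_def by (simp add: mod_Suc)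
        moreover have "i + c - 1 = i + t" using True by simp
        ultimately show ?thesis using fj E[of "i + c"] ic True eq by simp
      next
        case False3: False
        have "f (Suc j) = us ! (i + Suc t)" unfolding f_def using ji sj False3 t_def by (simp add: mod_Suc)
        then show ?thesis using fj E[of "i + Suc t"] ic False3 tc by simp
      qed
    qed
  qed
  ultimately show ?thesis by blast
qed

lemma walk_path:
  assumes e: "\<forall>j. Gedge S (f j) (f (Suc j))" and n: "1 \<le> n"
  shows "Gpath S (map f [0..<Suc n]) \<and> hd (map f [0..<Suc n]) = f 0 \<and> path_len (map f [0..<Suc n]) = n"
proof -
  have "Gpath S (map f [0..<Suc n])" unfolding Gpath_def
  proof (intro conjI allI impI)
    show "2 \<le> length (map f [0..<Suc n])" using n by simp
    fix j assume j: "0 < j \<and> j < length (map f [0..<Suc n])"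
    have mf: "map f [0..<Suc n] ! t = f t" if "t < Suc n" for t using that by (simp del: upt_Suc)
    have "map f [0..<Suc n] ! (j - 1) = f (j - 1)" "map f [0..<Suc n] ! j = f j" using j mf by auto
    moreover have "Suc (j - 1) = j" using j by simp
    ultimately show "Gedge S (map f [0..<Suc n] ! (j - 1)) (map f [0..<Suc n] ! j)"
      using e[rule_format, of "j - 1"] by simp
  qed
  moreover have "hd (map f [0..<Suc n]) = f 0" by (simp add: hd_map del: upt_Suc)
  moreover have "path_len (map f [0..<Suc n]) = n" by (simp add: path_len_def)
  ultimately show ?thesis by blast
qed

lemma long_path_closed:
  fixes S :: "'a::finite \<Rightarrow> 'a list"
  assumes p: "Gpath S us" and l: "card (UNIV :: 'a set) ^ 2 \<le> path_len us"
  shows "\<exists>vs. subpath S vs us \<and> closed_path vs"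
proof -
  let ?W = "{xs :: 'a list. set xs \<subseteq> UNIV \<and> length xs = 2}"
  have len2: "length (us ! t) = 2" if "t < length us" for t
  proof (cases "t = 0")
    case True
    have g: "Gedge S (us ! (1 - 1)) (us ! 1)" using p unfolding Gpath_def by auto
    show ?thesis using True Gedge_len[OF g] by simp
  next
    case False
    then show ?thesis using p that Gedge_len unfolding Gpath_def by blast
  qed
  have sub: "set us \<subseteq> ?W" using len2 by (auto simp: in_set_conv_nth)
  have "card (set us) \<le> card ?W" by (rule card_mono[OF finite_lists_length_eq[OF finite_UNIV] sub])
  also have "card ?W = card (UNIV :: 'a set) ^ 2" by (rule card_lists_length_eq) simp
  finally have "card (set us) < length us" using l p unfolding path_len_def Gpath_def by linarith
  then have "\<not> distinct us" using distinct_card by fastforce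
  then obtain i0 j0 where ij0: "i0 < length us" "j0 < length us" "i0 \<noteq> j0" "us ! i0 = us ! j0"
    unfolding distinct_conv_nth by blast
  define i where "i = min i0 j0"
  define j where "j = max i0 j0"
  have ij: "i < j" "j < length us" "us ! i = us ! j" using ij0 unfolding i_def j_def
    by (auto simp: min_def max_def)
  define vs where "vs = take (j - i + 1) (drop i us)"
  have lvs: "length vs = j - i + 1" using ij vs_def by simp
  have vn: "vs ! t = us ! (i + t)" if "t < length vs" for t using that lvs vs_def ij by simp
  have "Gpath S vs" unfolding Gpath_def
  proof (intro conjI allI impI)
    show "2 \<le> length vs" using lvs ij by simp
    fix t assume t: "0 < t \<and> t < length vs"
    have "Gedge S (us ! (i + t - 1)) (us ! (i + t))" using p t lvs ij unfolding Gpath_def by auto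
    moreover have "t - 1 < length vs" using t by linarith
    ultimately show "Gedge S (vs ! (t - 1)) (vs ! t)" using vn[of t] vn[of "t - 1"] t by simp
  qed
  moreover have "closed_path vs"
  proof -
    have ne: "vs \<noteq> []" using lvs by auto
    have "hd vs = vs ! 0" using hd_conv_nth[OF ne] .
    moreover have "last vs = vs ! (j - i)" using last_conv_nth[OF ne] lvs by simp
    ultimately show ?thesis unfolding closed_path_def using vn[of 0] vn[of "j - i"] lvs ij by simp
  qed
  ultimately show ?thesis unfolding subpath_def vs_def by blast
qed




lemma funpow_split: "m \<le> n \<Longrightarrow> (f ^^ n) x = (f ^^ (n - m)) ((f ^^ m) x)"
proof -
  assume "m \<le> n"
  then have n: "n = (n - m) + m" by simp
  have "(f ^^ ((n - m) + m)) x = (f ^^ (n - m)) ((f ^^ m) x)" by (simp add: funpow_add)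
  then show ?thesis using n by simp
qed

lemma funpow_split2: "m \<le> n \<Longrightarrow> (f ^^ n) x = (f ^^ m) ((f ^^ (n - m)) x)"
  using funpow_split[of "n - m" n f x] by simp

lemma growth:
  assumes ne: "\<forall>a. S a \<noteq> []" and prim: "primitive S"
    and hull: "\<exists>\<Omega>. subshift \<Omega> \<and> dictset \<Omega> = legal S"
  shows "\<exists>m. \<forall>m'\<ge>m. \<forall>a. L \<le> length ((substw S ^^ m') [a])"
proof (cases "L = 0")
  case True then show ?thesis by simp
next
  case False
  obtain \<Omega> where \<Omega>: "subshift \<Omega>" "dictset \<Omega> = legal S" using hull by blast
  obtain \<omega> where "\<omega> \<in> \<Omega>" using \<Omega>(1) unfolding subshift_def by blast
  then have "win \<omega> 0 L \<in> legal S" using \<Omega>(2) win_in_dict[of L \<omega> 0] False dict_sub_dictset by blast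
  then obtain a0 n where a0: "subword (win \<omega> 0 L) ((substw S ^^ n) [a0])" unfolding legal_def by blast
  then have Ln: "L \<le> length ((substw S ^^ n) [a0])" using subword_length by fastforce
  obtain p where p: "\<forall>a b. subword [b] ((substw S ^^ p) [a])" using prim unfolding primitive_def by blast
  have "L \<le> length ((substw S ^^ m') [b])" if "n + p \<le> m'" for m' b
  proof -
    have "subword ((substw S ^^ n) [a0]) ((substw S ^^ n) ((substw S ^^ p) [b]))"
      using substw_iter_subword[OF ne] p by blast
    also have "(substw S ^^ n) ((substw S ^^ p) [b]) = (substw S ^^ (n + p)) [b]"
      by (simp add: funpow_add)
    finally have "L \<le> length ((substw S ^^ (n + p)) [b])" using Ln subword_length by fastforce
    also have "\<dots> \<le> length ((substw S ^^ (m' - (n + p))) ((substw S ^^ (n + p)) [b]))"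
      by (rule substw_iter_length[OF ne])
    also have "(substw S ^^ (m' - (n + p))) ((substw S ^^ (n + p)) [b]) = (substw S ^^ m') [b]"
      using funpow_split[OF that, of "substw S" "[b]"] by simp
    finally show ?thesis .
  qed
  then show ?thesis by blast
qed

lemma letters:
  assumes ne: "\<forall>a. S a \<noteq> []" and prim: "primitive S"
  shows "\<exists>p. \<forall>m\<ge>p. \<forall>b. [b] \<in> dict ((substc S ^^ m) \<omega>0)"
proof -
  obtain p where p: "\<forall>a b. subword [b] ((substw S ^^ p) [a])" using prim unfolding primitive_def by blast
  have "[b] \<in> dict ((substc S ^^ m) \<omega>0)" if "p \<le> m" for m b
  proof -
    let ?\<omega> = "(substc S ^^ (m - p)) \<omega>0"
    have e: "(substc S ^^ m) \<omega>0 = (substc S ^^ p) ?\<omega>"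
      by (rule funpow_split2[OF that])
    have "[?\<omega> 0] \<in> dict ?\<omega>" using win_in_dict[of 1 ?\<omega> 0] by (simp add: win_def)
    then have "(substw S ^^ p) [?\<omega> 0] \<in> dict ((substc S ^^ p) ?\<omega>)" by (rule dict_iter[OF ne])
    then have "(substw S ^^ p) [?\<omega> 0] \<in> dict ((substc S ^^ m) \<omega>0)" using e by simp
    then show ?thesis using dict_subword p by blast
  qed
  then show ?thesis by blast
qed

lemma legal_eventually:
  assumes ne: "\<forall>a. S a \<noteq> []" and prim: "primitive S" and u: "u \<in> legal S"
  shows "\<exists>N0. \<forall>N\<ge>N0. u \<in> dict ((substc S ^^ N) \<omega>0)"
proof -
  obtain a n where an: "subword u ((substw S ^^ n) [a])" using u unfolding legal_def by blast
  obtain p where p: "\<forall>m\<ge>p. \<forall>b. [b] \<in> dict ((substc S ^^ m) \<omega>0)" using letters[OF ne prim] by blast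
  have "u \<in> dict ((substc S ^^ N) \<omega>0)" if "p + n \<le> N" for N
  proof -
    have e: "(substc S ^^ N) \<omega>0 = (substc S ^^ n) ((substc S ^^ (N - n)) \<omega>0)"
      by (rule funpow_split2) (use that in simp)
    have "[a] \<in> dict ((substc S ^^ (N - n)) \<omega>0)" using p that by auto
    then have "(substw S ^^ n) [a] \<in> dict ((substc S ^^ N) \<omega>0)" unfolding e by (rule dict_iter[OF ne])
    then show ?thesis using an dict_subword by blast
  qed
  then show ?thesis by blast
qed

lemma words_eventually_legal:
  assumes ne: "\<forall>a. S a \<noteq> []" and prim: "primitive S"
    and hull: "\<exists>\<Omega>. subshift \<Omega> \<and> dictset \<Omega> = legal S"
    and K: "\<forall>u\<in>dict ((substc S ^^ K) \<omega>0). length u = 2 \<longrightarrow> u \<in> legal S"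
    and L: "0 < L"
  shows "\<exists>N0. \<forall>N\<ge>N0. \<forall>u\<in>dict ((substc S ^^ N) \<omega>0). length u = L \<longrightarrow> u \<in> legal S"
proof -
  obtain m where m: "\<forall>m'\<ge>m. \<forall>a. L \<le> length ((substw S ^^ m') [a])" using growth[OF ne prim hull] by blast
  have "u \<in> legal S" if N: "K + m \<le> N" and u: "u \<in> dict ((substc S ^^ N) \<omega>0)" "length u = L" for N u
  proof -
    define T where "T a = (substw S ^^ (N - K)) [a]" for a
    let ?\<omega> = "(substc S ^^ K) \<omega>0"
    have neT: "\<forall>a. T a \<noteq> []" unfolding T_def using substw_iter_ne[OF ne] by blast
    have lenT: "L \<le> length (T a)" for a unfolding T_def using m N by simp
    have "(substc S ^^ N) \<omega>0 = (substc S ^^ (N - K)) ?\<omega>"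
      by (rule funpow_split) (use N in simp)
    also have "\<dots> = substc T ?\<omega>" unfolding T_def by (rule substc_iter[OF ne])
    finally have e: "(substc S ^^ N) \<omega>0 = substc T ?\<omega>" .
    have "u \<in> dict (substc T ?\<omega>)" using u e by simp
    then obtain n where "u = win (substc T ?\<omega>) n (length u)" by (rule dictE)
    then have un: "u = win (substc T ?\<omega>) n L" using u by simp
    obtain k where k: "blockpos T ?\<omega> k \<le> n" "n < blockpos T ?\<omega> (k + 1)" using bp_cover[OF neT] by blast
    have "blockpos T ?\<omega> (k + 1 + 1) = blockpos T ?\<omega> (k + 1) + int (length (T (?\<omega> (k + 1))))"
      by (rule bp_succ)
    then have "n + int L \<le> blockpos T ?\<omega> (k + int 2)" using k lenT[of "?\<omega> (k + 1)"] by (simp add: add.assoc)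
    then have sw: "subword u (substw T (win ?\<omega> k 2))" unfolding un
      by (rule window_cover[OF neT k(1)]) (use L in simp)
    have "substw T (win ?\<omega> k 2) = (substw S ^^ (N - K)) (win ?\<omega> k 2)"
      unfolding T_def by (rule substw_iter_letters)
    moreover have "win ?\<omega> k 2 \<in> legal S" using K win_in_dict[of 2 ?\<omega> k] by simp
    ultimately have "substw T (win ?\<omega> k 2) \<in> legal S" using legal_iter[OF ne] by simp
    then show ?thesis using sw legal_subword by blast
  qed
  then show ?thesis by blast
qed

lemma agree_win: "agree (Suc r) x z \<Longrightarrow> win x (- int r) (2 * r) = win z (- int r) (2 * r)"
proof (intro nth_equalityI)
  fix i assume a: "agree (Suc r) x z" and i: "i < length (win x (- int r) (2 * r))"
  then show "win x (- int r) (2 * r) ! i = win z (- int r) (2 * r) ! i"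
    unfolding agree_def by simp
qed simp

lemma agree_sym: "agree r x z \<Longrightarrow> agree r z x"
  unfolding agree_def by auto

lemma orbit_IHS: "shift m ((substc S ^^ n) \<omega>0) \<in> IHS S \<omega>0 n"
proof -
  have "shift m ((substc S ^^ n) \<omega>0) \<in> {shift m ((substc S ^^ n) \<omega>0) | m. True}" by blast
  then show ?thesis unfolding IHS_def using subset_cclosure by (rule subsetD[rotated])
qed

lemma IHS_agree: "x \<in> IHS S \<omega>0 n \<Longrightarrow> \<exists>m. agree r x (shift m ((substc S ^^ n) \<omega>0))"
proof -
  assume "x \<in> IHS S \<omega>0 n"
  then obtain z where "z \<in> {shift m ((substc S ^^ n) \<omega>0) | m. True}" "agree r x z"
    unfolding IHS_def cclosure_iff by blast
  then show ?thesis by blast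
qed

lemma hdist_nonneg: "A \<noteq> {} \<Longrightarrow> B \<noteq> {} \<Longrightarrow> 0 \<le> hdist A B"
proof -
  assume "A \<noteq> {}" "B \<noteq> {}"
  then obtain x where "x \<in> A" by blast
  show ?thesis by (rule hdist_ge[OF \<open>x \<in> A\<close> \<open>B \<noteq> {}\<close>]) (simp add: cdist_nonneg)
qed




theorem theorem1:
  fixes S :: "'a::finite \<Rightarrow> 'a list" and \<omega>0 :: "'a config"
  assumes nonempty_images: "\<forall>a. S a \<noteq> []"
    and prim: "primitive S"
    and hull_exists: "\<exists>\<Omega>. subshift \<Omega> \<and> dictset \<Omega> = legal S"
  shows "(((\<lambda>n. hdist (IHS S \<omega>0 n) (OmegaS S)) \<longlonglongrightarrow> 0)
     \<longleftrightarrow> (\<forall>us. Gpath S us \<and> hd us \<in> dict \<omega>0 \<and> length (hd us) = 2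
              \<longrightarrow> \<not> (\<exists>vs. subpath S vs us \<and> closed_path vs)))
   \<and> ((\<forall>us. Gpath S us \<and> hd us \<in> dict \<omega>0 \<and> length (hd us) = 2
              \<longrightarrow> \<not> (\<exists>vs. subpath S vs us \<and> closed_path vs))
     \<longleftrightarrow> (\<forall>us. Gpath S us \<and> hd us \<in> dict \<omega>0 \<and> length (hd us) = 2
              \<longrightarrow> path_len us < card (UNIV :: 'a set) ^ 2))"
proof -
  note ne = nonempty_images
  define K where "K = card (UNIV :: 'a set) ^ 2"
  have K1: "1 \<le> K" unfolding K_def using card_gt_0_iff[of "UNIV :: 'a set"] by simp
  define II where "II = (\<forall>us. Gpath S us \<and> hd us \<in> dict \<omega>0 \<and> length (hd us) = 2
              \<longrightarrow> \<not> (\<exists>vs. subpath S vs us \<and> closed_path vs))"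
  define III where "III = (\<forall>us. Gpath S us \<and> hd us \<in> dict \<omega>0 \<and> length (hd us) = 2
              \<longrightarrow> path_len us < card (UNIV :: 'a set) ^ 2)"
  define I where "I = ((\<lambda>n. hdist (IHS S \<omega>0 n) (OmegaS S)) \<longlonglongrightarrow> 0)"
  have OS: "subshift (OmegaS S)" "dictset (OmegaS S) = legal S" using OmegaS_prop[OF hull_exists] by auto
  have OSne: "OmegaS S \<noteq> {}" using OS(1) unfolding subshift_def by simp
  have walk: "\<exists>f. f 0 \<in> dict \<omega>0 \<and> (\<forall>j. Gedge S (f j) (f (Suc j)))" if "\<not> II"
  proof -
    obtain us vs where us: "Gpath S us" "hd us \<in> dict \<omega>0" "subpath S vs us" "closed_path vs"
      using \<open>\<not> II\<close> unfolding II_def by blast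
    obtain f where "f 0 = hd us" "\<forall>j. Gedge S (f j) (f (Suc j))" using pump[OF us(1,3,4)] by blast
    then show ?thesis using us(2) by metis
  qed
  have II_III: "II \<longleftrightarrow> III"
  proof
    assume II
    show III unfolding III_def
    proof (intro allI impI)
      fix us assume us: "Gpath S us \<and> hd us \<in> dict \<omega>0 \<and> length (hd us) = 2"
      show "path_len us < card (UNIV :: 'a set) ^ 2"
      proof (rule ccontr)
        assume "\<not> path_len us < card (UNIV :: 'a set) ^ 2"
        then have "card (UNIV :: 'a set) ^ 2 \<le> path_len us" by simp
        then have "\<exists>vs. subpath S vs us \<and> closed_path vs" using long_path_closed us by blast
        then show False using \<open>II\<close> us unfolding II_def by blast
      qed
    qed
  next
    assume III
    show II
    proof (rule ccontr)
      assume "\<not> II"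
      then obtain f where f: "f 0 \<in> dict \<omega>0" "\<forall>j. Gedge S (f j) (f (Suc j))" using walk by blast
      have wp: "Gpath S (map f [0..<Suc K]) \<and> hd (map f [0..<Suc K]) = f 0 \<and> path_len (map f [0..<Suc K]) = K"
        by (rule walk_path[OF f(2) K1])
      have "length (f 0) = 2" using Gedge_len f(2) by blast
      then have "Gpath S (map f [0..<Suc K]) \<and> hd (map f [0..<Suc K]) \<in> dict \<omega>0 \<and> length (hd (map f [0..<Suc K])) = 2"
        using wp f(1) by (simp del: upt_Suc)
      then have "path_len (map f [0..<Suc K]) < card (UNIV :: 'a set) ^ 2"
        using \<open>III\<close> unfolding III_def by blast
      then show False using wp unfolding K_def by (simp del: upt_Suc)
    qed
  qed
  have I_II: "I \<longleftrightarrow> II"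
  proof
    assume I
    show II
    proof (rule ccontr)
      assume "\<not> II"
      then obtain f where f: "f 0 \<in> dict \<omega>0" "\<forall>j. Gedge S (f j) (f (Suc j))" using walk by blast
      have ge: "1 / 3 \<le> hdist (IHS S \<omega>0 n) (OmegaS S)" for n
      proof -
        have fw: "f n \<in> dict ((substc S ^^ n) \<omega>0)" "f n \<notin> legal S" "length (f n) = 2"
          using forward_walk[OF ne f(1) f(2)] by auto
        obtain q where q: "f n = win ((substc S ^^ n) \<omega>0) q (length (f n))" using fw(1) by (rule dictE)
        let ?x = "shift (- q) ((substc S ^^ n) \<omega>0)"
        have wx: "win ?x 0 2 = f n" using q fw(3) by (simp add: win_shift)
        have xI: "?x \<in> IHS S \<omega>0 n" by (rule orbit_IHS)
        have "1 / 3 \<le> cdist ?x y" if y: "y \<in> OmegaS S" for y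
        proof (rule ccontr)
          assume "\<not> 1 / 3 \<le> cdist ?x y"
          then have "cdist ?x y < 1 / (real 2 + 1)" by simp
          then have ag: "agree 2 ?x y" by (rule cdist_agree)
          have "win ?x 0 2 = win y 0 2"
          proof (rule nth_equalityI)
            fix i assume "i < length (win ?x 0 2)"
            then have "i < 2" by simp
            then show "win ?x 0 2 ! i = win y 0 2 ! i" using ag unfolding agree_def by simp
          qed simp
          moreover have "win y 0 2 \<in> legal S"
            using y win_in_dict[of 2 y 0] dict_sub_dictset[OF y] OS(2) by auto
          ultimately show False using wx fw(2) by simp
        qed
        then show ?thesis using hdist_ge[OF xI OSne] by blast
      qed
      obtain no where "\<forall>n\<ge>no. norm (hdist (IHS S \<omega>0 n) (OmegaS S) - 0) < 1 / 3"
        using LIMSEQ_D[of _ 0 "1/3"] \<open>I\<close> unfolding I_def by force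
      then have "norm (hdist (IHS S \<omega>0 no) (OmegaS S) - 0) < 1 / 3" by blast
      then show False using ge[of no] by simp
    qed
  next
    assume II
    then have III using II_III by simp
    have legK: "\<forall>u\<in>dict ((substc S ^^ K) \<omega>0). length u = 2 \<longrightarrow> u \<in> legal S"
    proof (intro ballI impI)
      fix u assume u: "u \<in> dict ((substc S ^^ K) \<omega>0)" "length u = 2"
      show "u \<in> legal S"
      proof (rule ccontr)
        assume "u \<notin> legal S"
        then obtain us where us: "length us = Suc K" "hd us \<in> dict \<omega>0" "last us = u"
          "\<forall>j. 0 < j \<and> j < length us \<longrightarrow> Gedge S (us ! (j - 1)) (us ! j)"
          using back_path[OF ne u(1) u(2)] by blast
        have gp: "Gpath S us" unfolding Gpath_def using us(1,4) K1 by simp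
        have "Gedge S (us ! (1 - 1)) (us ! 1)" using us(4) us(1) K1 by (metis One_nat_def le_imp_less_Suc zero_less_one)
        then have "length (us ! 0) = 2" using Gedge_len by fastforce
        moreover have "us \<noteq> []" using us(1) by auto
        then have "hd us = us ! 0" by (rule hd_conv_nth)
        ultimately have "length (hd us) = 2" by simp
        then have "path_len us < card (UNIV :: 'a set) ^ 2" using \<open>III\<close> gp us(2) unfolding III_def by blast
        then show False using us(1) unfolding path_len_def K_def by simp
      qed
    qed
    show I unfolding I_def
    proof (rule LIMSEQ_I)
      fix \<epsilon> :: real assume "0 < \<epsilon>"
      then obtain r0 where r0: "1 / (real r0 + 1) < \<epsilon>" using small_eps by blast
      define r where "r = Suc r0"
      have "1 / (real r + 1) \<le> 1 / (real r0 + 1)" unfolding r_def by (intro divide_left_mono) auto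
      then have r\<epsilon>: "1 / (real r + 1) < \<epsilon>" using r0 by linarith
      define L where "L = 2 * r"
      have L0: "0 < L" unfolding L_def r_def by simp
      obtain N1 where N1: "\<forall>N\<ge>N1. \<forall>u\<in>dict ((substc S ^^ N) \<omega>0). length u = L \<longrightarrow> u \<in> legal S"
        using words_eventually_legal[OF ne prim hull_exists legK L0] by blast
      let ?LW = "{u \<in> legal S. length u = L}"
      have finLW: "finite ?LW"
        by (rule finite_subset[OF _ finite_lists_length_eq[OF finite_UNIV, of L]]) auto
      have "\<forall>u\<in>?LW. eventually (\<lambda>N. u \<in> dict ((substc S ^^ N) \<omega>0)) sequentially"
      proof
        fix u assume "u \<in> ?LW"
        then obtain N0 where "\<forall>N\<ge>N0. u \<in> dict ((substc S ^^ N) \<omega>0)"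
          using legal_eventually[OF ne prim] by blast
        then show "eventually (\<lambda>N. u \<in> dict ((substc S ^^ N) \<omega>0)) sequentially"
          unfolding eventually_sequentially by blast
      qed
      then have "eventually (\<lambda>N. \<forall>u\<in>?LW. u \<in> dict ((substc S ^^ N) \<omega>0)) sequentially"
        by (rule eventually_ball_finite[OF finLW])
      then obtain N2 where N2: "\<forall>N\<ge>N2. \<forall>u\<in>?LW. u \<in> dict ((substc S ^^ N) \<omega>0)"
        unfolding eventually_sequentially by blast
      have "norm (hdist (IHS S \<omega>0 N) (OmegaS S) - 0) < \<epsilon>" if N: "max N1 N2 \<le> N" for N
      proof -
        let ?\<sigma> = "(substc S ^^ N) \<omega>0"
        have IHSne: "IHS S \<omega>0 N \<noteq> {}" using orbit_IHS[where m=0 and n=N] by blast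
        have h1: "\<forall>x\<in>IHS S \<omega>0 N. \<exists>y\<in>OmegaS S. cdist x y \<le> 1 / (real r + 1)"
        proof
          fix x assume x: "x \<in> IHS S \<omega>0 N"
          obtain m where m: "agree (Suc r) x (shift m ?\<sigma>)" using IHS_agree[OF x] by blast
          have w: "win x (- int r) L = win ?\<sigma> (- int r - m) L"
            using agree_win[OF m] unfolding L_def by (simp add: win_shift)
          have "win ?\<sigma> (- int r - m) L \<in> dict ?\<sigma>" by (rule win_in_dict[OF L0])
          moreover have "N1 \<le> N" using N by simp
          ultimately have "win ?\<sigma> (- int r - m) L \<in> legal S" using N1 by simp
          then have "win x (- int r) L \<in> legal S" using w by simp
          then have "win x (- int r) L \<in> dictset (OmegaS S)" using OS(2) by simp
          then obtain y where y: "y \<in> OmegaS S" "win x (- int r) L \<in> dict y" unfolding dictset_def by blast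
          obtain n1 where "win x (- int r) L = win y n1 (length (win x (- int r) L))" using y(2) by (rule dictE)
          then have "win x (- int r) (2 * r) = win y n1 (2 * r)" unfolding L_def by simp
          then have "agree r x (shift (- int r - n1) y)" by (rule align)
          moreover have "shift (- int r - n1) y \<in> OmegaS S" using OS(1) y(1) unfolding subshift_def by blast
          ultimately show "\<exists>y\<in>OmegaS S. cdist x y \<le> 1 / (real r + 1)" using agree_cdist by blast
        qed
        have h2: "\<forall>y\<in>OmegaS S. \<exists>x\<in>IHS S \<omega>0 N. cdist x y \<le> 1 / (real r + 1)"
        proof
          fix y assume y: "y \<in> OmegaS S"
          have "win y (- int r) L \<in> dict y" by (rule win_in_dict[OF L0])
          then have "win y (- int r) L \<in> legal S" using dict_sub_dictset[OF y] OS(2) by auto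
          moreover have "N2 \<le> N" using N by simp
          ultimately have "win y (- int r) L \<in> dict ?\<sigma>" using N2 by simp
          then obtain n1 where "win y (- int r) L = win ?\<sigma> n1 (length (win y (- int r) L))" by (rule dictE)
          then have "win y (- int r) (2 * r) = win ?\<sigma> n1 (2 * r)" unfolding L_def by simp
          then have "agree r y (shift (- int r - n1) ?\<sigma>)" by (rule align)
          then have "cdist (shift (- int r - n1) ?\<sigma>) y \<le> 1 / (real r + 1)" using agree_sym agree_cdist by blast
          moreover have "shift (- int r - n1) ?\<sigma> \<in> IHS S \<omega>0 N" by (rule orbit_IHS)
          ultimately show "\<exists>x\<in>IHS S \<omega>0 N. cdist x y \<le> 1 / (real r + 1)" by blast
        qed
        have "hdist (IHS S \<omega>0 N) (OmegaS S) \<le> 1 / (real r + 1)" by (rule hdist_le[OF IHSne OSne h1 h2])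
        moreover have "0 \<le> hdist (IHS S \<omega>0 N) (OmegaS S)" by (rule hdist_nonneg[OF IHSne OSne])
        ultimately show ?thesis using r\<epsilon> by simp
      qed
      then show "\<exists>no. \<forall>N\<ge>no. norm (hdist (IHS S \<omega>0 N) (OmegaS S) - 0) < \<epsilon>" by blast
    qed
  qed
  show ?thesis using I_II II_III unfolding I_def II_def III_def by simp
qed


end
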